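(* For $n=1,2,\dots$ let $\mathcal X^n=(X^n_\sigma)_{\sigma\in\mathcal T}$ be time-homogeneous tree-indexed Markov chains with values in a complete separable metric space $(E,r)$, with associated chains $\mathcal R^n=(R^n_k)_{k\ge0}$, and let $\widetilde R^n_t:=R^n_{[nt]}$. Assume that $\widetilde{\mathcal R}^n\Rightarrow\mathcal R$ as $n\to\infty$ for a càdlàg process $\mathcal R=(R_t)_{t\ge0}$ with state space $E$ and deterministic initial value $R_0=x\in E$. Then: (1) for any $\sigma_1,\dots,\sigma_k\in\mathcal T$, $(X^n_{\sigma_i})_{i=1,\dots,k}\to(x,\dots,x)$ in probability as $n\to\infty$; (2) for fixed $t>0$, if $\Sigma^n_1,\Sigma^n_2$ are two vertices chosen independently and uniformly at random from $\mathcal T_{[nt]}$ (independent of $\mathcal X^n$), then $\big(X^n_{\Sigma^n_1\wedge\Sigma^n_2},X^n_{(\Sigma^n_1\wedge\Sigma^n_2)0},X^n_{(\Sigma^n_1\wedge\Sigma^n_2)1}\big)\to(x,x,x)$ in probability as $n\to\infty$.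
   Context: $\mathcal T=\bigcup_{k\ge0}\mathcal T_k$ is the complete binary tree, $\mathcal T_0=\{\emptyset\}$, $\mathcal T_k=\{0,1\}^k$, children of $\sigma$ are $\sigma0,\sigma1$; $\sigma\le\tau$ means $\sigma$ is a prefix of $\tau$, and $\tau\wedge\tau'$ is the longest common prefix (most recent common ancestor). A time-homogeneous tree-indexed Markov chain with kernel $p$ (from $E$ to $\mathcal B(E^2)$) satisfies: given all $X_\tau$ with $\tau\wedge\sigma\le\sigma$, the pair $(X_{\sigma0},X_{\sigma1})$ has law $p(X_\sigma,\cdot)$. The associated chain $\mathcal R^n$ has $R^n_0=X^n_\emptyset$ and kernel $\tfrac12(p_n(x,A\times E)+p_n(x,E\times A))$; equivalently $\mathcal R^n\stackrel d=(X^n_{\Sigma_k})_{k\ge0}$ for a symmetric random walk $(\Sigma_k)$ down the tree independent of $\mathcal X^n$. $\Rightarrow$ denotes weak convergence of processes. *)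

theory Defs
  imports "HOL-Probability.Probability" "HOL-Library.Sublist"
begin

text \<open>Vertices of the complete binary tree are bit lists; the children of sigma are
  sigma @ [False] (= sigma0) and sigma @ [True] (= sigma1); prefix is the tree order,
  longest_common_prefix is the most recent common ancestor.\<close>

definition past_algebra :: "'a measure \<Rightarrow> (bool list \<Rightarrow> 'a \<Rightarrow> 'e::topological_space) \<Rightarrow> bool list \<Rightarrow> 'a measure" where
  "past_algebra M X \<sigma> = sigma (space M)
     {X \<tau> -` B \<inter> space M | \<tau> B. \<not> strict_prefix \<sigma> \<tau> \<and> B \<in> sets borel}"

definition tree_markov :: "'a measure \<Rightarrow> (bool list \<Rightarrow> 'a \<Rightarrow> 'e::polish_space)
    \<Rightarrow> ('e \<Rightarrow> ('e \<times> 'e) measure) \<Rightarrow> bool" where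
  "tree_markov M X p \<longleftrightarrow>
     prob_space M \<and> (\<forall>\<sigma>. X \<sigma> \<in> borel_measurable M) \<and>
     p \<in> borel \<rightarrow>\<^sub>M prob_algebra borel \<and>
     (\<forall>\<sigma>. \<forall>G \<in> sets (past_algebra M X \<sigma>). \<forall>A \<in> sets borel.
        measure M (G \<inter> {\<omega> \<in> space M. (X (\<sigma> @ [False]) \<omega>, X (\<sigma> @ [True]) \<omega>) \<in> A})
        = (\<integral>\<omega>. indicator G \<omega> * measure (p (X \<sigma> \<omega>)) A \<partial>M))"

text \<open>Symmetric random walk down the tree: driven by i.i.d. fair coins.\<close>
definition coin_measure :: "(nat \<Rightarrow> bool) measure" where
  "coin_measure = PiM UNIV (\<lambda>_. measure_pmf (pmf_of_set (UNIV :: bool set)))"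

definition walk :: "(nat \<Rightarrow> bool) \<Rightarrow> nat \<Rightarrow> bool list" where
  "walk c k = map c [0..<k]"

definition assoc_chain :: "(bool list \<Rightarrow> 'a \<Rightarrow> 'e) \<Rightarrow> 'a \<times> (nat \<Rightarrow> bool) \<Rightarrow> nat \<Rightarrow> 'e" where
  "assoc_chain X = (\<lambda>(\<omega>, c) k. X (walk c k) \<omega>)"

definition rescaled :: "nat \<Rightarrow> ('c \<Rightarrow> nat \<Rightarrow> 'e) \<Rightarrow> 'c \<Rightarrow> real \<Rightarrow> 'e" where
  "rescaled n Y = (\<lambda>z t. Y z (nat \<lfloor>real n * t\<rfloor>))"

definition cadlag :: "(real \<Rightarrow> 'e::topological_space) \<Rightarrow> bool" where
  "cadlag y \<longleftrightarrow> (\<forall>t\<ge>0. continuous (at_right t) y) \<and> (\<forall>t>0. \<exists>l. (y \<longlongrightarrow> l) (at_left t))"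

definition time_changes :: "(real \<Rightarrow> real) set" where
  "time_changes = {l. continuous_on {0..} l \<and> strict_mono_on {0..} l \<and> l ` {0..} = {0..}}"

text \<open>Convergence in the Skorokhod J1 topology of D([0,infinity),E) (Billingsley, Thm 16.2).\<close>
definition skorokhod_conv :: "(nat \<Rightarrow> real \<Rightarrow> 'e::metric_space) \<Rightarrow> (real \<Rightarrow> 'e) \<Rightarrow> bool" where
  "skorokhod_conv ys y \<longleftrightarrow> (\<exists>ls. (\<forall>n. ls n \<in> time_changes) \<and>
     (\<forall>\<epsilon>>0. eventually (\<lambda>n. \<forall>t\<ge>0. \<bar>ls n t - t\<bar> \<le> \<epsilon>) sequentially) \<and>
     (\<forall>T. \<forall>\<epsilon>>0. eventually (\<lambda>n. \<forall>t\<in>{0..T}. dist (ys n (ls n t)) (y t) \<le> \<epsilon>) sequentially))"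

text \<open>Continuity on D (metrizable, so sequential continuity).\<close>
definition skorokhod_continuous :: "((real \<Rightarrow> 'e::metric_space) \<Rightarrow> real) \<Rightarrow> bool" where
  "skorokhod_continuous f \<longleftrightarrow> (\<forall>y ys. cadlag y \<and> (\<forall>n. cadlag (ys n)) \<and> skorokhod_conv ys y
      \<longrightarrow> (\<lambda>n. f (ys n)) \<longlonglongrightarrow> f y)"

definition weak_conv_D :: "(nat \<Rightarrow> 'c measure) \<Rightarrow> (nat \<Rightarrow> 'c \<Rightarrow> real \<Rightarrow> 'e::metric_space)
    \<Rightarrow> 'd measure \<Rightarrow> ('d \<Rightarrow> real \<Rightarrow> 'e) \<Rightarrow> bool" where
  "weak_conv_D P Y Q Z \<longleftrightarrow> (\<forall>f. skorokhod_continuous f \<and> (\<exists>B. \<forall>y. cadlag y \<longrightarrow> \<bar>f y\<bar> \<le> B)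
      \<longrightarrow> (\<lambda>n. \<integral>z. f (Y n z) \<partial>P n) \<longlonglongrightarrow> (\<integral>z. f (Z z) \<partial>Q))"

definition level_unif :: "nat \<Rightarrow> bool list pmf" where
  "level_unif k = pmf_of_set {\<sigma>. length \<sigma> = k}"

end

theory Submission
  imports Defs
begin


definition phi :: "real \<Rightarrow> real \<Rightarrow> real" where "phi \<delta> t = max 0 (1 - t/\<delta>)"
definition hh :: "'e::metric_space \<Rightarrow> 'e \<Rightarrow> real" where "hh x e = min 1 (dist e x)"
definition FF :: "real \<Rightarrow> 'e::metric_space \<Rightarrow> (real \<Rightarrow> 'e) \<Rightarrow> real" where
  "FF \<delta> x y = (SUP t\<in>{0..}. phi \<delta> t * hh x (y t))"

lemma term_bnd: assumes "\<delta> > 0" "t \<ge> 0" shows "0 \<le> phi \<delta> t * hh x e" "phi \<delta> t * hh x e \<le> 1"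
proof -
  have a: "0 \<le> phi \<delta> t" "phi \<delta> t \<le> 1" using assms by (auto simp: phi_def)
  have b: "0 \<le> hh x e" "hh x e \<le> 1" by (auto simp: hh_def)
  show "0 \<le> phi \<delta> t * hh x e" using a b by simp
  show "phi \<delta> t * hh x e \<le> 1" using a b by (simp add: mult_le_one)
qed

lemma bdd_terms: "\<delta> > 0 \<Longrightarrow> bdd_above ((\<lambda>t. phi \<delta> t * hh x (y t)) ` {0..})"
  using term_bnd by (auto intro!: bdd_aboveI[where M=1])

lemma FF_bnd: assumes "\<delta> > 0" shows "0 \<le> FF \<delta> x y" "FF \<delta> x y \<le> 1"
proof -
  show "0 \<le> FF \<delta> x y" unfolding FF_def
    by (rule cSUP_upper2[where x=0]) (use bdd_terms[OF assms] term_bnd(1)[OF assms order_refl] in auto)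
  show "FF \<delta> x y \<le> 1" unfolding FF_def
    by (rule cSUP_least) (use term_bnd[OF assms] in auto)
qed

lemma FF_ge: "\<delta> > 0 \<Longrightarrow> t \<ge> 0 \<Longrightarrow> phi \<delta> t * hh x (y t) \<le> FF \<delta> x y"
  unfolding FF_def by (rule cSUP_upper) (use bdd_terms in auto)

lemma min1_lip: "\<bar>min 1 (u::real) - min 1 v\<bar> \<le> \<bar>u - v\<bar>" by (cases "u \<le> 1"; cases "v \<le> 1"; simp add: min_def)

lemma hh_lip: "\<bar>hh x a - hh x b\<bar> \<le> dist a b"
proof -
  have "\<bar>hh x a - hh x b\<bar> \<le> \<bar>dist a x - dist x b\<bar>" unfolding hh_def using min1_lip[of "dist a x" "dist b x"] by (simp add: dist_commute)
  also have "\<dots> \<le> dist a b" by (rule abs_dist_diff_le)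
  finally show ?thesis .
qed

lemma max0_lip: "\<bar>max 0 (u::real) - max 0 v\<bar> \<le> \<bar>u - v\<bar>" by (cases "u \<le> 0"; cases "v \<le> 0"; simp add: max_def)

lemma phi_lip: "\<delta> > 0 \<Longrightarrow> \<bar>phi \<delta> a - phi \<delta> b\<bar> \<le> \<bar>a - b\<bar> / \<delta>"
proof -
  assume d: "\<delta> > 0"
  have "\<bar>max 0 (1 - a/\<delta>) - max 0 (1 - b/\<delta>)\<bar> \<le> \<bar>(1 - a/\<delta>) - (1 - b/\<delta>)\<bar>" by (rule max0_lip)
  also have "(1 - a/\<delta>) - (1 - b/\<delta>) = (b - a)/\<delta>" by (simp add: diff_divide_distrib)
  also have "\<bar>(b - a)/\<delta>\<bar> = \<bar>a - b\<bar> / \<delta>" using d by (simp add: abs_divide abs_minus_commute)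
  finally show ?thesis unfolding phi_def .
qed

lemma sup_diff:
  fixes F G :: "'i \<Rightarrow> real"
  assumes "S \<noteq> {}" "bdd_above (F ` S)" "bdd_above (G ` S)" "\<And>s. s \<in> S \<Longrightarrow> \<bar>F s - G s\<bar> \<le> c"
  shows "\<bar>(SUP s\<in>S. F s) - (SUP s\<in>S. G s)\<bar> \<le> c"
proof -
  have 1: "(SUP s\<in>S. F s) \<le> (SUP s\<in>S. G s) + c"
  proof (rule cSUP_least[OF assms(1)])
    fix s assume s: "s \<in> S"
    have "G s \<le> (SUP s\<in>S. G s)" by (rule cSUP_upper[OF s assms(3)])
    then show "F s \<le> (SUP s\<in>S. G s) + c" using assms(4)[OF s] by linarith
  qed
  have 2: "(SUP s\<in>S. G s) \<le> (SUP s\<in>S. F s) + c"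
  proof (rule cSUP_least[OF assms(1)])
    fix s assume s: "s \<in> S"
    have "F s \<le> (SUP s\<in>S. F s)" by (rule cSUP_upper[OF s assms(2)])
    then show "G s \<le> (SUP s\<in>S. F s) + c" using assms(4)[OF s] by linarith
  qed
  show ?thesis using 1 2 by linarith
qed

lemma FF_close:
  assumes d: "\<delta> > 0" and l: "l \<in> time_changes" and e: "\<forall>t\<ge>0. \<bar>l t - t\<bar> \<le> \<epsilon>"
    and c: "\<forall>t\<in>{0..\<delta>}. dist (z (l t)) (y t) \<le> \<epsilon>"
  shows "\<bar>FF \<delta> x z - FF \<delta> x y\<bar> \<le> \<epsilon>/\<delta> + \<epsilon>"
proof -
  have img: "l ` {0..} = {0..}" using l by (simp add: time_changes_def)
  have "FF \<delta> x z = (SUP t\<in>l ` {0..}. phi \<delta> t * hh x (z t))" unfolding FF_def img ..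
  also have "\<dots> = (SUP s\<in>{0..}. phi \<delta> (l s) * hh x (z (l s)))" by (simp add: image_comp)
  finally have 1: "FF \<delta> x z = (SUP s\<in>{0..}. phi \<delta> (l s) * hh x (z (l s)))" .
  have lpos: "s \<ge> 0 \<Longrightarrow> l s \<ge> 0" for s using img by auto
  have "\<bar>(SUP s\<in>{0..}. phi \<delta> (l s) * hh x (z (l s))) - (SUP s\<in>{0..}. phi \<delta> s * hh x (y s))\<bar> \<le> \<epsilon>/\<delta> + \<epsilon>"
  proof (rule sup_diff)
    show "bdd_above ((\<lambda>s. phi \<delta> (l s) * hh x (z (l s))) ` {0..})"
      using term_bnd(2)[OF d lpos] by (auto intro!: bdd_aboveI[where M=1])
    show "bdd_above ((\<lambda>s. phi \<delta> s * hh x (y s)) ` {0..})" by (rule bdd_terms[OF d])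
    fix s :: real assume s: "s \<in> {0..}"
    let ?a = "z (l s)" and ?b = "y s"
    have h: "0 \<le> hh x ?a" "hh x ?a \<le> 1" by (auto simp: hh_def)
    have p: "0 \<le> phi \<delta> s" "phi \<delta> s \<le> 1" using s d by (auto simp: phi_def)
    have eq: "phi \<delta> (l s) * hh x ?a - phi \<delta> s * hh x ?b
       = (phi \<delta> (l s) - phi \<delta> s) * hh x ?a + phi \<delta> s * (hh x ?a - hh x ?b)" by algebra
    have t1: "\<bar>(phi \<delta> (l s) - phi \<delta> s) * hh x ?a\<bar> \<le> \<epsilon>/\<delta>"
    proof -
      have "\<bar>(phi \<delta> (l s) - phi \<delta> s) * hh x ?a\<bar> \<le> \<bar>phi \<delta> (l s) - phi \<delta> s\<bar>"
        using h by (simp add: abs_mult mult_left_le)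
      also have "\<dots> \<le> \<bar>l s - s\<bar> / \<delta>" by (rule phi_lip[OF d])
      also have "\<dots> \<le> \<epsilon>/\<delta>" using e s d by (simp add: divide_right_mono)
      finally show ?thesis .
    qed
    have t2: "\<bar>phi \<delta> s * (hh x ?a - hh x ?b)\<bar> \<le> \<epsilon>"
    proof (cases "s \<le> \<delta>")
      case True
      have "\<bar>phi \<delta> s * (hh x ?a - hh x ?b)\<bar> \<le> \<bar>hh x ?a - hh x ?b\<bar>"
        using p by (simp add: abs_mult mult_left_le_one_le)
      also have "\<dots> \<le> dist ?a ?b" by (rule hh_lip)
      also have "\<dots> \<le> \<epsilon>" using c s True by auto
      finally show ?thesis .
    next
      case False
      then have "phi \<delta> s = 0" using d by (simp add: phi_def)
      moreover have "0 \<le> \<epsilon>" using e by (metis abs_ge_zero order_trans order_refl)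
      ultimately show ?thesis by simp
    qed
    show "\<bar>phi \<delta> (l s) * hh x ?a - phi \<delta> s * hh x ?b\<bar> \<le> \<epsilon>/\<delta> + \<epsilon>"
      unfolding eq using t1 t2 abs_triangle_ineq[of "(phi \<delta> (l s) - phi \<delta> s) * hh x ?a" "phi \<delta> s * (hh x ?a - hh x ?b)"]
      by linarith
  qed auto
  moreover have 2: "FF \<delta> x y = (SUP s\<in>{0..}. phi \<delta> s * hh x (y s))" by (simp add: FF_def)
  ultimately show ?thesis unfolding 1 2 by simp
qed

lemma FF_cont: assumes d: "\<delta> > 0" shows "skorokhod_continuous (FF \<delta> x)"
  unfolding skorokhod_continuous_def
proof (intro allI impI, elim conjE)
  fix y and ys :: "nat \<Rightarrow> real \<Rightarrow> 'a" assume "skorokhod_conv ys y"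
  then obtain ls where ls: "\<forall>n. ls n \<in> time_changes"
    and e1: "\<forall>\<epsilon>>0. eventually (\<lambda>n. \<forall>t\<ge>0. \<bar>ls n t - t\<bar> \<le> \<epsilon>) sequentially"
    and e2: "\<forall>T. \<forall>\<epsilon>>0. eventually (\<lambda>n. \<forall>t\<in>{0..T}. dist (ys n (ls n t)) (y t) \<le> \<epsilon>) sequentially"
    unfolding skorokhod_conv_def by blast
  show "(\<lambda>n. FF \<delta> x (ys n)) \<longlonglongrightarrow> FF \<delta> x y"
  proof (rule tendstoI)
    fix \<eta> :: real assume \<eta>: "\<eta> > 0"
    define \<epsilon> where "\<epsilon> = min \<delta> 1 * \<eta> / 3"
    have ep: "\<epsilon> > 0" using d \<eta> by (simp add: \<epsilon>_def)
    have b1: "\<epsilon>/\<delta> \<le> \<eta>/3" using d \<eta> by (simp add: \<epsilon>_def field_simps min_def)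
    have b2: "\<epsilon> \<le> \<eta>/3" using d \<eta> by (simp add: \<epsilon>_def field_simps min_def)
    show "eventually (\<lambda>n. dist (FF \<delta> x (ys n)) (FF \<delta> x y) < \<eta>) sequentially"
      using eventually_conj[OF e1[rule_format, OF ep] e2[rule_format, OF ep, of \<delta>]]
    proof (rule eventually_mono)
      fix n assume "(\<forall>t\<ge>0. \<bar>ls n t - t\<bar> \<le> \<epsilon>) \<and> (\<forall>t\<in>{0..\<delta>}. dist (ys n (ls n t)) (y t) \<le> \<epsilon>)"
      then have "\<bar>FF \<delta> x (ys n) - FF \<delta> x y\<bar> \<le> \<epsilon>/\<delta> + \<epsilon>"
        using FF_close[OF d ls[rule_format]] by blast
      then show "dist (FF \<delta> x (ys n)) (FF \<delta> x y) < \<eta>" using b1 b2 \<eta> unfolding dist_real_def by linarith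
    qed
  qed
qed



lemma coin_prob: "prob_space coin_measure"
  unfolding coin_measure_def by (rule prob_space_PiM) (rule prob_space_measure_pmf)

lemma space_coin: "space coin_measure = UNIV"
  unfolding coin_measure_def by (simp add: space_PiM)

lemma walk_Suc: "walk c (Suc k) = walk c k @ [c k]"
  by (simp add: walk_def)

lemma walk_meas: "(\<lambda>c. walk c k) \<in> coin_measure \<rightarrow>\<^sub>M count_space UNIV"
proof (induction k)
  case 0 then show ?case by (simp add: walk_def)
next
  case (Suc k)
  have "(\<lambda>c. (\<lambda>\<sigma> c. \<sigma> @ [c k]) (walk c k) c) \<in> coin_measure \<rightarrow>\<^sub>M count_space UNIV"
  proof (rule measurable_compose_countable[OF _ Suc])
    fix \<sigma> :: "bool list"
    have "(\<lambda>c. c k) \<in> coin_measure \<rightarrow>\<^sub>M measure_pmf (pmf_of_set UNIV)"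
      unfolding coin_measure_def by (rule measurable_component_singleton) simp
    moreover have "(\<lambda>b. \<sigma> @ [b]) \<in> measure_pmf (pmf_of_set (UNIV::bool set)) \<rightarrow>\<^sub>M count_space UNIV"
      by simp
    ultimately show "(\<lambda>c. \<sigma> @ [c k]) \<in> coin_measure \<rightarrow>\<^sub>M count_space UNIV"
      using measurable_compose by blast
  qed
  then show ?case by (simp add: walk_Suc)
qed

lemma XW_meas:
  assumes "\<And>\<sigma>. X \<sigma> \<in> borel_measurable M"
  shows "(\<lambda>z. X (walk (snd z) k) (fst z)) \<in> borel_measurable (M \<Otimes>\<^sub>M coin_measure)"
proof (rule measurable_compose_countable[where f="\<lambda>\<sigma> z. X \<sigma> (fst z)"])
  show "(\<lambda>z. X \<sigma> (fst z)) \<in> borel_measurable (M \<Otimes>\<^sub>M coin_measure)" for \<sigma>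
    by (rule measurable_compose[OF measurable_fst assms])
  show "(\<lambda>z. walk (snd z) k) \<in> M \<Otimes>\<^sub>M coin_measure \<rightarrow>\<^sub>M count_space UNIV"
    by (rule measurable_compose[OF measurable_snd walk_meas])
qed

lemma walk_eq_iff: "length \<sigma> = k \<Longrightarrow> walk c k = \<sigma> \<longleftrightarrow> (\<forall>i<k. c i = \<sigma> ! i)"
  by (auto simp: walk_def list_eq_iff_nth_eq)

lemma coin_walk:
  assumes "length \<sigma> = k"
  shows "measure coin_measure {c. walk c k = \<sigma>} = (1/2)^k"
proof -
  let ?P = "\<lambda>_::nat. measure_pmf (pmf_of_set (UNIV::bool set))"
  have set: "{c. walk c k = \<sigma>} = prod_emb UNIV ?P {..<k} (Pi\<^sub>E {..<k} (\<lambda>i. {\<sigma> ! i}))"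
    using assms apply (simp add: prod_emb_def space_PiM restrict_PiE_iff walk_eq_iff set_eq_iff Pi_iff)
    by blast
  have "emeasure coin_measure {c. walk c k = \<sigma>} = (\<Prod>i\<in>{..<k}. emeasure (?P i) {\<sigma> ! i})"
    unfolding set coin_measure_def
    by (rule emeasure_PiM_emb) (simp_all add: prob_space_measure_pmf)
  also have "\<dots> = (\<Prod>i\<in>{..<k}. ennreal (1/2))"
    by (simp add: emeasure_pmf_single)
  also have "\<dots> = ennreal (1/2) ^ k" by (simp only: prod_constant card_lessThan)
  also have "\<dots> = ennreal ((1/2)^k)" by (rule ennreal_power) simp
  finally show ?thesis by (simp add: measure_def)
qed



lemma resc_eq: "rescaled n (assoc_chain Xn) z t = Xn (walk (snd z) (nat \<lfloor>real n * t\<rfloor>)) (fst z)"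
  by (cases z) (simp add: rescaled_def assoc_chain_def)

lemma phi_anti: "a \<le> b \<Longrightarrow> \<delta> > 0 \<Longrightarrow> phi \<delta> b \<le> phi \<delta> a"
  using divide_right_mono[of a b \<delta>] unfolding phi_def by (intro max.mono) auto

lemma hh_nn: "0 \<le> hh x e" by (simp add: hh_def)

lemma FF_Y_eq:
  assumes n: "n \<ge> 1" and d: "\<delta> > 0"
  shows "FF \<delta> x (rescaled n (assoc_chain Xn) z)
       = (SUP k\<in>UNIV. phi \<delta> (real k / real n) * hh x (Xn (walk (snd z) k) (fst z)))"
    (is "_ = (SUP k\<in>UNIV. ?G k)")
proof -
  let ?W = "\<lambda>k. Xn (walk (snd z) k) (fst z)"
  have bdd: "bdd_above (range ?G)"
    by (auto intro!: bdd_aboveI[where M=1] term_bnd(2)[OF d])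
  show ?thesis
  proof (rule antisym)
    show "FF \<delta> x (rescaled n (assoc_chain Xn) z) \<le> (SUP k\<in>UNIV. ?G k)"
      unfolding FF_def
    proof (rule cSUP_least)
      fix t :: real assume t: "t \<in> {0..}"
      define k where "k = nat \<lfloor>real n * t\<rfloor>"
      have "real k \<le> real n * t" using t n unfolding k_def by simp
      then have "real k / real n \<le> t" using n by (simp add: divide_le_eq mult.commute)
      then have "phi \<delta> t \<le> phi \<delta> (real k / real n)" by (rule phi_anti[OF _ d])
      then have "phi \<delta> t * hh x (rescaled n (assoc_chain Xn) z t) \<le> ?G k"
        by (simp add: resc_eq k_def mult_right_mono hh_nn)
      also have "\<dots> \<le> (SUP k\<in>UNIV. ?G k)" by (rule cSUP_upper[OF _ bdd]) simp
      finally show "phi \<delta> t * hh x (rescaled n (assoc_chain Xn) z t) \<le> (SUP k\<in>UNIV. ?G k)" .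
    qed simp
    show "(SUP k\<in>UNIV. ?G k) \<le> FF \<delta> x (rescaled n (assoc_chain Xn) z)"
    proof (rule cSUP_least)
      fix k :: nat
      have "nat \<lfloor>real n * (real k / real n)\<rfloor> = k" using n by simp
      then have "?G k = phi \<delta> (real k / real n) * hh x (rescaled n (assoc_chain Xn) z (real k / real n))"
        by (simp add: resc_eq)
      also have "\<dots> \<le> FF \<delta> x (rescaled n (assoc_chain Xn) z)" by (rule FF_ge[OF d]) simp
      finally show "?G k \<le> FF \<delta> x (rescaled n (assoc_chain Xn) z)" .
    qed simp
  qed
qed

lemma hh_meas:
  fixes f :: "'m \<Rightarrow> 'e::polish_space"
  assumes "f \<in> borel_measurable M"
  shows "(\<lambda>z. hh x (f z)) \<in> borel_measurable M"
  using assms[measurable] unfolding hh_def by measurable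

lemma FF_Y_meas:
  fixes Xn :: "bool list \<Rightarrow> 'a \<Rightarrow> 'e::polish_space"
  assumes n: "n \<ge> 1" and d: "\<delta> > 0" and X: "\<And>\<sigma>. Xn \<sigma> \<in> borel_measurable M"
  shows "(\<lambda>z. FF \<delta> x (rescaled n (assoc_chain Xn) z)) \<in> borel_measurable (M \<Otimes>\<^sub>M coin_measure)"
proof -
  have "(\<lambda>z. SUP k\<in>UNIV. phi \<delta> (real k / real n) * hh x (Xn (walk (snd z) k) (fst z))) \<in> borel_measurable (M \<Otimes>\<^sub>M coin_measure)"
  proof (rule borel_measurable_cSUP)
    fix k :: nat
    show "(\<lambda>z. phi \<delta> (real k / real n) * hh x (Xn (walk (snd z) k) (fst z))) \<in> borel_measurable (M \<Otimes>\<^sub>M coin_measure)"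
      by (rule borel_measurable_times[OF borel_measurable_const hh_meas[OF XW_meas[where X=Xn, OF X]]])
  next
    fix z show "bdd_above ((\<lambda>k. phi \<delta> (real k / real n) * hh x (Xn (walk (snd z) k) (fst z))) ` UNIV)"
      by (auto intro!: bdd_aboveI[where M=1] term_bnd(2)[OF d])
  qed simp
  then show ?thesis by (simp add: FF_Y_eq[OF n d])
qed



lemma single_le:
  fixes X :: "bool list \<Rightarrow> 'a \<Rightarrow> 'e::polish_space"
  assumes M: "prob_space M" and X: "\<And>\<sigma>. X \<sigma> \<in> borel_measurable M" and len: "length \<sigma> = k"
  shows "measure M {\<omega> \<in> space M. dist (X \<sigma> \<omega>) x > \<epsilon>}
     \<le> 2^k * measure (M \<Otimes>\<^sub>M coin_measure) {z \<in> space (M \<Otimes>\<^sub>M coin_measure). dist (X (walk (snd z) k) (fst z)) x > \<epsilon>}"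
proof -
  interpret coin: prob_space coin_measure by (rule coin_prob)
  interpret P: prob_space "M \<Otimes>\<^sub>M coin_measure" by (rule prob_space_pair[OF M coin_prob])
  define A where "A = {\<omega> \<in> space M. dist (X \<sigma> \<omega>) x > \<epsilon>}"
  define C where "C = {c. walk c k = \<sigma>}"
  define E where "E = {z \<in> space (M \<Otimes>\<^sub>M coin_measure). dist (X (walk (snd z) k) (fst z)) x > \<epsilon>}"
  note X[measurable]
  have XW: "(\<lambda>z. X (walk (snd z) k) (fst z)) \<in> borel_measurable (M \<Otimes>\<^sub>M coin_measure)"
    by (rule XW_meas[where X=X, OF X])
  have As: "A \<in> sets M" unfolding A_def by measurable
  have Es: "E \<in> sets (M \<Otimes>\<^sub>M coin_measure)" unfolding E_def using XW[measurable] by measurable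
  have "(\<lambda>c. walk c k) -` {\<sigma>} \<inter> space coin_measure \<in> sets coin_measure"
    by (rule measurable_sets[OF walk_meas]) simp
  then have Cs: "C \<in> sets coin_measure" by (simp add: C_def space_coin vimage_def)
  have sub: "A \<times> C \<subseteq> E" unfolding A_def C_def E_def by (auto simp: space_pair_measure space_coin)
  have "emeasure (M \<Otimes>\<^sub>M coin_measure) (A \<times> C) = emeasure M A * emeasure coin_measure C"
    by (rule coin.emeasure_pair_measure_Times[OF As Cs])
  then have "measure (M \<Otimes>\<^sub>M coin_measure) (A \<times> C) = measure M A * measure coin_measure C"
    by (simp add: measure_def enn2real_mult)
  also have "measure coin_measure C = (1/2)^k" unfolding C_def by (rule coin_walk[OF len])
  finally have eq: "measure (M \<Otimes>\<^sub>M coin_measure) (A \<times> C) = measure M A * (1/2)^k" .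
  have "measure (M \<Otimes>\<^sub>M coin_measure) (A \<times> C) \<le> measure (M \<Otimes>\<^sub>M coin_measure) E"
    by (rule P.finite_measure_mono[OF sub Es])
  then have "measure M A * (1/2)^k \<le> measure (M \<Otimes>\<^sub>M coin_measure) E" by (simp add: eq)
  then have "2^k * (measure M A * (1/2)^k) \<le> 2^k * measure (M \<Otimes>\<^sub>M coin_measure) E"
    by (simp add: mult_left_mono)
  moreover have "2^k * (measure M A * (1/2)^k) = measure M A"
    by (simp add: power_one_over field_simps)
  ultimately show ?thesis unfolding A_def E_def by simp
qed



lemma FF_R_lim:
  assumes cad: "cadlag y" and y0: "y 0 = x"
  shows "(\<lambda>j. FF (1 / real (Suc j)) x y) \<longlonglongrightarrow> 0"
proof (rule tendstoI)
  fix \<eta> :: real assume \<eta>: "\<eta> > 0"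
  have "continuous (at_right 0) y" using cad by (simp add: cadlag_def)
  then have "(y \<longlongrightarrow> y 0) (at_right 0)" by (simp add: continuous_within)
  then have "eventually (\<lambda>t. dist (y t) (y 0) < \<eta>/2) (at_right (0::real))"
    by (rule tendstoD) (use \<eta> in simp)
  then have "eventually (\<lambda>t. dist (y t) x < \<eta>/2) (at_right (0::real))" by (simp add: y0)
  then obtain b :: real where b: "b > 0" and hb: "\<And>t. t > 0 \<Longrightarrow> t < b \<Longrightarrow> dist (y t) x < \<eta>/2"
    unfolding eventually_at_right_field by auto
  obtain J where J: "inverse (real (Suc J)) < b" using reals_Archimedean[OF b] by auto
  show "eventually (\<lambda>j. dist (FF (1 / real (Suc j)) x y) 0 < \<eta>) sequentially"
    unfolding eventually_sequentially
  proof (intro exI allI impI)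
    fix j assume j: "j \<ge> J"
    define \<delta> where "\<delta> = 1 / real (Suc j)"
    have d: "\<delta> > 0" by (simp add: \<delta>_def)
    have "\<delta> \<le> inverse (real (Suc J))" using j by (simp add: \<delta>_def inverse_eq_divide frac_le)
    then have db: "\<delta> < b" using J by simp
    have "FF \<delta> x y \<le> \<eta>/2" unfolding FF_def
    proof (rule cSUP_least)
      fix t :: real assume t: "t \<in> {0..}"
      have p: "0 \<le> phi \<delta> t" "phi \<delta> t \<le> 1" using t d by (auto simp: phi_def)
      show "phi \<delta> t * hh x (y t) \<le> \<eta>/2"
      proof (cases "t < b")
        case True
        have "hh x (y t) \<le> \<eta>/2"
        proof (cases "t = 0")
          case True then show ?thesis using y0 \<eta> by (simp add: hh_def)
        next
          case False
          then have "dist (y t) x < \<eta>/2" using hb t \<open>t < b\<close> by auto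
          then show ?thesis by (simp add: hh_def)
        qed
        then show ?thesis using p hh_nn[of x "y t"] by (meson mult_left_le_one_le order_trans)
      next
        case False
        then have "phi \<delta> t = 0" using db d by (simp add: phi_def)
        then show ?thesis using \<eta> by simp
      qed
    qed simp
    moreover have "0 \<le> FF \<delta> x y" by (rule FF_bnd(1)[OF d])
    ultimately show "dist (FF (1 / real (Suc j)) x y) 0 < \<eta>" using \<eta> by (simp add: \<delta>_def dist_real_def)
  qed
qed

lemma lim_side:
  fixes R :: "'b \<Rightarrow> real \<Rightarrow> 'e::polish_space"
  assumes N: "prob_space N" and cad: "\<And>\<omega>. \<omega> \<in> space N \<Longrightarrow> cadlag (R \<omega>)"
    and init: "AE \<omega> in N. R \<omega> 0 = x" and \<eta>: "\<eta> > 0"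
  shows "\<exists>\<delta>>0. (\<integral>\<omega>. FF \<delta> x (R \<omega>) \<partial>N) < \<eta>"
proof (rule ccontr)
  interpret N: prob_space N by (rule N)
  assume "\<not> ?thesis"
  then have ge: "\<And>\<delta>. \<delta> > 0 \<Longrightarrow> (\<integral>\<omega>. FF \<delta> x (R \<omega>) \<partial>N) \<ge> \<eta>" using not_less by blast
  define g where "g j \<omega> = FF (1 / real (Suc j)) x (R \<omega>)" for j \<omega>
  have int: "integrable N (g j)" for j
  proof (rule ccontr)
    assume "\<not> integrable N (g j)"
    then have "integral\<^sup>L N (g j) = 0" by (rule not_integrable_integral_eq)
    moreover have "integral\<^sup>L N (g j) \<ge> \<eta>" unfolding g_def by (rule ge) simp
    ultimately show False using \<eta> by simp
  qed
  have "(\<lambda>j. integral\<^sup>L N (g j)) \<longlonglongrightarrow> integral\<^sup>L N (\<lambda>\<omega>. 0::real)"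
  proof (rule integral_dominated_convergence[where w="\<lambda>_. 1"])
    show "(\<lambda>\<omega>. 0::real) \<in> borel_measurable N" by simp
    show "g j \<in> borel_measurable N" for j using int[of j] by (rule borel_measurable_integrable)
    show "integrable N (\<lambda>_. 1::real)" by simp
    show "AE \<omega> in N. (\<lambda>j. g j \<omega>) \<longlonglongrightarrow> 0"
      using init by (rule AE_mp) (auto intro!: AE_I2 simp del: of_nat_Suc simp: g_def FF_R_lim cad)
    show "AE \<omega> in N. norm (g j \<omega>) \<le> 1" for j
      using FF_bnd[of "1 / real (Suc j)" x] by (auto simp: g_def)
  qed
  then have "eventually (\<lambda>j. integral\<^sup>L N (g j) < \<eta>) sequentially"
    using \<eta> by (auto dest: order_tendstoD(2))
  then obtain j where "integral\<^sup>L N (g j) < \<eta>" by (auto simp: eventually_sequentially)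
  moreover have "integral\<^sup>L N (g j) \<ge> \<eta>" unfolding g_def by (rule ge) simp
  ultimately show False by simp
qed



lemma R_m_conv:
  fixes M :: "nat \<Rightarrow> 'a measure"
    and X :: "nat \<Rightarrow> bool list \<Rightarrow> 'a \<Rightarrow> 'e::polish_space"
    and p :: "nat \<Rightarrow> 'e \<Rightarrow> ('e \<times> 'e) measure"
    and N :: "'b measure"
    and R :: "'b \<Rightarrow> real \<Rightarrow> 'e"
  assumes markov: "\<And>n. n \<ge> 1 \<Longrightarrow> tree_markov (M n) (X n) (p n)"
    and N_prob: "prob_space N"
    and R_cadlag: "\<And>\<omega>. \<omega> \<in> space N \<Longrightarrow> cadlag (R \<omega>)"
    and R_init: "AE \<omega> in N. R \<omega> 0 = x"
    and conv: "weak_conv_D (\<lambda>n. M n \<Otimes>\<^sub>M coin_measure) (\<lambda>n. rescaled n (assoc_chain (X n))) N R"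
    and \<epsilon>: "\<epsilon> > 0"
  shows "(\<lambda>n. measure (M n \<Otimes>\<^sub>M coin_measure) {z \<in> space (M n \<Otimes>\<^sub>M coin_measure). dist (X n (walk (snd z) m) (fst z)) x > \<epsilon>}) \<longlonglongrightarrow> 0"
proof (rule tendstoI)
  fix \<eta> :: real assume \<eta>: "\<eta> > 0"
  define e where "e = min 1 \<epsilon>"
  have e: "e > 0" "e \<le> 1" using \<epsilon> by (auto simp: e_def)
  obtain \<delta> where d: "\<delta> > 0" and lim: "(\<integral>\<omega>. FF \<delta> x (R \<omega>) \<partial>N) < e * \<eta> / 4"
    using lim_side[OF N_prob R_cadlag R_init, of "e * \<eta> / 4"] e \<eta> by auto
  have "(\<lambda>n. \<integral>z. FF \<delta> x (rescaled n (assoc_chain (X n)) z) \<partial>(M n \<Otimes>\<^sub>M coin_measure)) \<longlonglongrightarrow> (\<integral>\<omega>. FF \<delta> x (R \<omega>) \<partial>N)"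
  proof -
    have bd: "\<exists>B. \<forall>y. cadlag y \<longrightarrow> \<bar>FF \<delta> x y\<bar> \<le> B"
    proof (intro exI allI impI)
      fix y :: "real \<Rightarrow> 'e" show "\<bar>FF \<delta> x y\<bar> \<le> 1" using FF_bnd[OF d, of x y] by linarith
    qed
    show ?thesis using conv FF_cont[OF d, of x] bd unfolding weak_conv_D_def by blast
  qed
  moreover have "(\<integral>\<omega>. FF \<delta> x (R \<omega>) \<partial>N) < e * \<eta> / 2" using lim mult_pos_pos[OF e(1) \<eta>] by linarith
  ultimately have ev1: "eventually (\<lambda>n. (\<integral>z. FF \<delta> x (rescaled n (assoc_chain (X n)) z) \<partial>(M n \<Otimes>\<^sub>M coin_measure)) < e * \<eta> / 2) sequentially"
    by (rule order_tendstoD(2))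
  obtain N0 :: nat where N0: "2 * real m / \<delta> < real N0" using reals_Archimedean2 by blast
  have ev2: "eventually (\<lambda>n. n \<ge> Suc N0) sequentially" by (rule eventually_ge_at_top)
  show "eventually (\<lambda>n. dist (measure (M n \<Otimes>\<^sub>M coin_measure) {z \<in> space (M n \<Otimes>\<^sub>M coin_measure). dist (X n (walk (snd z) m) (fst z)) x > \<epsilon>}) 0 < \<eta>) sequentially"
    using eventually_conj[OF ev1 ev2]
  proof (rule eventually_mono)
    fix n assume hn: "(\<integral>z. FF \<delta> x (rescaled n (assoc_chain (X n)) z) \<partial>(M n \<Otimes>\<^sub>M coin_measure)) < e * \<eta> / 2 \<and> n \<ge> Suc N0"
    have n1: "n \<ge> 1" using hn by simp
    have tm: "tree_markov (M n) (X n) (p n)" by (rule markov[OF n1])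
    have Mp: "prob_space (M n)" and Xm: "\<And>\<sigma>. X n \<sigma> \<in> borel_measurable (M n)"
      using tm by (auto simp: tree_markov_def)
    interpret P: prob_space "M n \<Otimes>\<^sub>M coin_measure" by (rule prob_space_pair[OF Mp coin_prob])
    let ?u = "\<lambda>z. FF \<delta> x (rescaled n (assoc_chain (X n)) z)"
    let ?E = "{z \<in> space (M n \<Otimes>\<^sub>M coin_measure). dist (X n (walk (snd z) m) (fst z)) x > \<epsilon>}"
    have um: "?u \<in> borel_measurable (M n \<Otimes>\<^sub>M coin_measure)" by (rule FF_Y_meas[OF n1 d Xm])
    have ui: "integrable (M n \<Otimes>\<^sub>M coin_measure) ?u"
    proof (rule P.integrable_const_bound[where B=1])
      show "AE z in M n \<Otimes>\<^sub>M coin_measure. norm (?u z) \<le> 1"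
      proof (rule AE_I2)
        fix z show "norm (?u z) \<le> 1" using FF_bnd[OF d, of x "rescaled n (assoc_chain (X n)) z"] by simp
      qed
    qed (rule um)
    have mn: "real m / real n \<le> \<delta> / 2"
    proof -
      have "real N0 < real n" using hn by simp
      then have "2 * real m / \<delta> < real n" using N0 by linarith
      then have "2 * real m < real n * \<delta>" using d by (simp add: divide_less_eq)
      then show ?thesis using n1 d by (simp add: divide_le_eq field_simps)
    qed
    have sub: "?E \<subseteq> {z \<in> space (M n \<Otimes>\<^sub>M coin_measure). ?u z \<ge> e/2}"
    proof safe
      fix z assume z: "z \<in> space (M n \<Otimes>\<^sub>M coin_measure)" and dz: "dist (X n (walk (snd z) m) (fst z)) x > \<epsilon>"
      have "real m / real n / \<delta> \<le> (\<delta> / 2) / \<delta>" using divide_right_mono[OF mn, of \<delta>] d by simp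
      also have "(\<delta> / 2) / \<delta> = 1/2" using d by simp
      finally have "real m / real n / \<delta> \<le> 1/2" .
      then have ph: "phi \<delta> (real m / real n) \<ge> 1/2" unfolding phi_def by linarith
      have hh: "hh x (X n (walk (snd z) m) (fst z)) \<ge> e" using dz by (simp add: hh_def e_def)
      have "nat \<lfloor>real n * (real m / real n)\<rfloor> = m" using n1 by simp
      then have "rescaled n (assoc_chain (X n)) z (real m / real n) = X n (walk (snd z) m) (fst z)"
        by (simp add: resc_eq)
      then have "phi \<delta> (real m / real n) * hh x (X n (walk (snd z) m) (fst z)) \<le> ?u z"
        using FF_ge[OF d, of "real m / real n" x "rescaled n (assoc_chain (X n)) z"] by simp
      moreover have "e/2 \<le> phi \<delta> (real m / real n) * hh x (X n (walk (snd z) m) (fst z))"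
      proof -
        have "0 \<le> phi \<delta> (real m / real n)" using ph by linarith
        then have "1/2 * e \<le> phi \<delta> (real m / real n) * hh x (X n (walk (snd z) m) (fst z))"
          using mult_mono[OF ph hh] e by simp
        then show ?thesis by simp
      qed
      ultimately show "e/2 \<le> ?u z" by linarith
    qed
    have "measure (M n \<Otimes>\<^sub>M coin_measure) ?E \<le> measure (M n \<Otimes>\<^sub>M coin_measure) {z \<in> space (M n \<Otimes>\<^sub>M coin_measure). ?u z \<ge> e/2}"
      by (rule P.finite_measure_mono[OF sub]) (use um in measurable)
    also have "\<dots> \<le> (\<integral>z. ?u z \<partial>(M n \<Otimes>\<^sub>M coin_measure)) / (e/2)"
      by (rule integral_Markov_inequality_measure[OF ui, where A="space (M n \<Otimes>\<^sub>M coin_measure)"])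
         (use FF_bnd(1)[OF d] e in auto)
    also have "\<dots> < (e * \<eta> / 2) / (e/2)" by (rule divide_strict_right_mono) (use hn e in auto)
    also have "\<dots> = \<eta>" using e by simp
    finally show "dist (measure (M n \<Otimes>\<^sub>M coin_measure) ?E) 0 < \<eta>" by simp
  qed
qed



lemma card_len: "card {u :: bool list. length u = n} = 2^n"
  using card_lists_length_eq[of "UNIV :: bool set" n] by simp

lemma fin_len: "finite {u :: bool list. length u = n}"
  using finite_lists_length_eq[of "UNIV :: bool set" n] by simp

lemma card_pref:
  assumes "length \<tau> = J" "J \<le> k"
  shows "card {s :: bool list. length s = k \<and> prefix \<tau> s} = 2^(k - J)"
proof -
  have "{s :: bool list. length s = k \<and> prefix \<tau> s} = (\<lambda>u. \<tau> @ u) ` {u. length u = k - J}"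
    using assms by (auto simp: prefix_def)
  moreover have "inj (\<lambda>u. \<tau> @ (u::bool list))" by (simp add: inj_def)
  ultimately show ?thesis by (simp add: card_image inj_on_def card_len)
qed

lemma level_pref:
  assumes "length \<tau> = J"
  shows "measure_pmf.prob (level_unif k) {s. prefix \<tau> s} \<le> (1/2)^J"
proof -
  have ne: "{s :: bool list. length s = k} \<noteq> {}" by (auto intro: exI[of _ "replicate k True"])
  have "measure_pmf.prob (level_unif k) {s. prefix \<tau> s}
      = card ({s :: bool list. length s = k} \<inter> {s. prefix \<tau> s}) / card {s :: bool list. length s = k}"
    unfolding level_unif_def by (rule measure_pmf_of_set[OF ne fin_len])
  also have "\<dots> \<le> (1/2)^J"
  proof (cases "J \<le> k")
    case True
    have "{s :: bool list. length s = k} \<inter> {s. prefix \<tau> s} = {s. length s = k \<and> prefix \<tau> s}" by auto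
    then have "card ({s :: bool list. length s = k} \<inter> {s. prefix \<tau> s}) = 2^(k-J)"
      using card_pref[OF assms True] by simp
    moreover have "(2::real)^(k-J) / 2^k = (1/2)^J"
    proof -
      have "(2::real)^k = 2^(k-J) * 2^J" using True by (simp add: power_add[symmetric])
      then show ?thesis by (simp add: power_one_over)
    qed
    ultimately show ?thesis by (simp add: card_len)
  next
    case False
    have "{s :: bool list. length s = k} \<inter> {s. prefix \<tau> s} = {}"
      using False assms by (auto dest: prefix_length_le)
    then show ?thesis by simp
  qed
  finally show ?thesis .
qed

lemma lcp_bound:
  "measure_pmf.prob (pair_pmf (level_unif k) (level_unif k))
     {s. J \<le> length (longest_common_prefix (fst s) (snd s))} \<le> (1/2)^J"
proof -
  let ?Q = "pair_pmf (level_unif k) (level_unif k)"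
  let ?T = "{\<tau> :: bool list. length \<tau> = J}"
  let ?A = "\<lambda>\<tau>. {s :: bool list. prefix \<tau> s} \<times> {s. prefix \<tau> s}"
  have sub: "{s. J \<le> length (longest_common_prefix (fst s) (snd s))} \<subseteq> (\<Union>\<tau>\<in>?T. ?A \<tau>)"
  proof safe
    fix a b :: "bool list" assume h: "J \<le> length (longest_common_prefix (fst (a, b)) (snd (a, b)))"
    let ?l = "longest_common_prefix a b"
    have "prefix (take J ?l) ?l" by (rule take_is_prefix)
    then have "prefix (take J ?l) a" "prefix (take J ?l) b"
      using longest_common_prefix_prefix1 longest_common_prefix_prefix2 prefix_order.trans by blast+
    moreover have "length (take J ?l) = J" using h by simp
    ultimately show "(a, b) \<in> (\<Union>\<tau>\<in>?T. ?A \<tau>)" by blast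
  qed
  have "measure_pmf.prob ?Q {s. J \<le> length (longest_common_prefix (fst s) (snd s))}
      \<le> measure_pmf.prob ?Q (\<Union>\<tau>\<in>?T. ?A \<tau>)"
    by (rule measure_pmf.finite_measure_mono[OF sub]) simp
  also have "\<dots> \<le> (\<Sum>\<tau>\<in>?T. measure_pmf.prob ?Q (?A \<tau>))"
    by (rule measure_pmf.finite_measure_subadditive_finite) (auto simp: fin_len)
  also have "\<dots> \<le> (\<Sum>\<tau>\<in>?T. (1/2)^J * (1/2)^J)"
  proof (rule sum_mono)
    fix \<tau> assume "\<tau> \<in> ?T"
    then have l: "length \<tau> = J" by simp
    have "measure_pmf.prob ?Q (?A \<tau>) = measure_pmf.prob (level_unif k) {s. prefix \<tau> s} * measure_pmf.prob (level_unif k) {s. prefix \<tau> s}"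
      by (rule measure_pmf_prob_product) simp_all
    also have "\<dots> \<le> (1/2)^J * (1/2)^J"
      by (rule mult_mono) (use level_pref[OF l] in auto)
    finally show "measure_pmf.prob ?Q (?A \<tau>) \<le> (1/2)^J * (1/2)^J" .
  qed
  also have "\<dots> = 2^J * ((1/2)^J * (1/2)^J)" using card_len[of J] by simp
  also have "\<dots> = (1/2)^J" by (simp add: power_one_over)
  finally show ?thesis .
qed



lemma part1_bound:
  fixes X :: "bool list \<Rightarrow> 'a \<Rightarrow> 'e::polish_space"
  assumes M: "prob_space M" and X: "\<And>\<sigma>. X \<sigma> \<in> borel_measurable M"
  shows "measure M {\<omega> \<in> space M. \<exists>\<sigma>\<in>set ss. dist (X \<sigma> \<omega>) x > \<epsilon>}
    \<le> (\<Sum>\<sigma>\<in>set ss. 2^length \<sigma> * measure (M \<Otimes>\<^sub>M coin_measure) {z \<in> space (M \<Otimes>\<^sub>M coin_measure). dist (X (walk (snd z) (length \<sigma>)) (fst z)) x > \<epsilon>})"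
proof -
  interpret M: prob_space M by (rule M)
  have eq: "{\<omega> \<in> space M. \<exists>\<sigma>\<in>set ss. dist (X \<sigma> \<omega>) x > \<epsilon>} = (\<Union>\<sigma>\<in>set ss. {\<omega> \<in> space M. dist (X \<sigma> \<omega>) x > \<epsilon>})"
    by auto
  have "measure M (\<Union>\<sigma>\<in>set ss. {\<omega> \<in> space M. dist (X \<sigma> \<omega>) x > \<epsilon>}) \<le> (\<Sum>\<sigma>\<in>set ss. measure M {\<omega> \<in> space M. dist (X \<sigma> \<omega>) x > \<epsilon>})"
  proof (rule M.finite_measure_subadditive_finite)
    show "(\<lambda>\<sigma>. {\<omega> \<in> space M. dist (X \<sigma> \<omega>) x > \<epsilon>}) ` set ss \<subseteq> M.events"
    proof safe
      fix \<sigma> note X[of \<sigma>, measurable]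
      show "{\<omega> \<in> space M. dist (X \<sigma> \<omega>) x > \<epsilon>} \<in> M.events" by measurable
    qed
  qed simp
  also have "\<dots> \<le> (\<Sum>\<sigma>\<in>set ss. 2^length \<sigma> * measure (M \<Otimes>\<^sub>M coin_measure) {z \<in> space (M \<Otimes>\<^sub>M coin_measure). dist (X (walk (snd z) (length \<sigma>)) (fst z)) x > \<epsilon>})"
    by (rule sum_mono) (rule single_le[OF M X refl])
  finally show ?thesis unfolding eq .
qed

lemma part2_bound:
  fixes X :: "bool list \<Rightarrow> 'a \<Rightarrow> 'e::polish_space"
  assumes M: "prob_space M" and X: "\<And>\<sigma>. X \<sigma> \<in> borel_measurable M"
    and cov: "\<And>\<sigma>. length \<sigma> \<le> Suc J \<Longrightarrow> \<sigma> \<in> set ss"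
  shows "measure (M \<Otimes>\<^sub>M measure_pmf (pair_pmf (level_unif k) (level_unif k)))
     {z \<in> space (M \<Otimes>\<^sub>M measure_pmf (pair_pmf (level_unif k) (level_unif k))).
        dist (X (longest_common_prefix (fst (snd z)) (snd (snd z))) (fst z)) x > \<epsilon>
      \<or> dist (X (longest_common_prefix (fst (snd z)) (snd (snd z)) @ [False]) (fst z)) x > \<epsilon>
      \<or> dist (X (longest_common_prefix (fst (snd z)) (snd (snd z)) @ [True]) (fst z)) x > \<epsilon>}
    \<le> measure M {\<omega> \<in> space M. \<exists>\<sigma>\<in>set ss. dist (X \<sigma> \<omega>) x > \<epsilon>} + (1/2)^J"
    (is "measure ?Q ?B \<le> measure M ?S + _")
proof -
  let ?q = "pair_pmf (level_unif k) (level_unif k)"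
  let ?L = "{s. J \<le> length (longest_common_prefix (fst s) (snd s))}"
  interpret M: prob_space M by (rule M)
  interpret Q: prob_space ?Q by (rule prob_space_pair[OF M prob_space_measure_pmf])
  have Seq: "?S = (\<Union>\<sigma>\<in>set ss. {\<omega> \<in> space M. dist (X \<sigma> \<omega>) x > \<epsilon>})" by auto
  have Ss: "?S \<in> sets M" unfolding Seq
  proof (rule sets.finite_UN)
    fix \<sigma> note X[of \<sigma>, measurable]
    show "{\<omega> \<in> space M. dist (X \<sigma> \<omega>) x > \<epsilon>} \<in> sets M" by measurable
  qed simp
  have sub: "?B \<subseteq> (?S \<times> UNIV) \<union> (space M \<times> ?L)"
  proof
    fix z assume z: "z \<in> ?B"
    obtain \<omega> a b where zz: "z = (\<omega>, a, b)" by (cases z) auto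
    have \<omega>: "\<omega> \<in> space M" using z zz by (simp add: space_pair_measure)
    let ?v = "longest_common_prefix a b"
    show "z \<in> (?S \<times> UNIV) \<union> (space M \<times> ?L)"
    proof (cases "J \<le> length ?v")
      case True then show ?thesis using \<omega> zz by simp
    next
      case False
      then have "?v \<in> set ss" "?v @ [False] \<in> set ss" "?v @ [True] \<in> set ss" by (auto intro!: cov)
      then have "\<omega> \<in> ?S" using z zz \<omega> by auto
      then show ?thesis using zz by simp
    qed
  qed
  have Ls: "?S \<times> UNIV \<in> sets ?Q" using Ss by simp
  have Rs: "space M \<times> ?L \<in> sets ?Q" by simp
  have "measure ?Q ?B \<le> measure ?Q ((?S \<times> UNIV) \<union> (space M \<times> ?L))"
    by (rule Q.finite_measure_mono[OF sub]) (use Ls Rs in auto)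
  also have "\<dots> \<le> measure ?Q (?S \<times> UNIV) + measure ?Q (space M \<times> ?L)"
    by (rule measure_Un_le[OF Ls Rs])
  also have "measure ?Q (?S \<times> UNIV) = measure M ?S"
  proof -
    have "emeasure ?Q (?S \<times> UNIV) = emeasure M ?S * emeasure (measure_pmf ?q) UNIV"
      by (rule measure_pmf.emeasure_pair_measure_Times[OF Ss]) simp
    then show ?thesis by (simp add: measure_def enn2real_mult)
  qed
  also have "measure ?Q (space M \<times> ?L) = measure_pmf.prob ?q ?L"
  proof -
    have "emeasure ?Q (space M \<times> ?L) = emeasure M (space M) * emeasure (measure_pmf ?q) ?L"
      by (rule measure_pmf.emeasure_pair_measure_Times) simp_all
    then show ?thesis by (simp add: measure_def enn2real_mult M.emeasure_space_1)
  qed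
  also have "measure_pmf.prob ?q ?L \<le> (1/2)^J" by (rule lcp_bound)
  finally show ?thesis by simp
qed

theorem lemma4p1:
  fixes M :: "nat \<Rightarrow> 'a measure"
    and X :: "nat \<Rightarrow> bool list \<Rightarrow> 'a \<Rightarrow> 'e::polish_space"
    and p :: "nat \<Rightarrow> 'e \<Rightarrow> ('e \<times> 'e) measure"
    and N :: "'b measure"
    and R :: "'b \<Rightarrow> real \<Rightarrow> 'e"
    and x :: 'e
  assumes markov: "\<And>n. n \<ge> 1 \<Longrightarrow> tree_markov (M n) (X n) (p n)"
    and N_prob: "prob_space N"
    and R_meas: "\<And>t. (\<lambda>\<omega>. R \<omega> t) \<in> borel_measurable N"
    and R_cadlag: "\<And>\<omega>. \<omega> \<in> space N \<Longrightarrow> cadlag (R \<omega>)"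
    and R_init: "AE \<omega> in N. R \<omega> 0 = x"
    and conv: "weak_conv_D (\<lambda>n. M n \<Otimes>\<^sub>M coin_measure) (\<lambda>n. rescaled n (assoc_chain (X n))) N R"
  shows "(\<forall>(ss :: bool list list) \<epsilon>. \<epsilon> > 0 \<longrightarrow>
           (\<lambda>n. measure (M n) {\<omega> \<in> space (M n). \<exists>\<sigma>\<in>set ss. dist (X n \<sigma> \<omega>) x > \<epsilon>}) \<longlonglongrightarrow> 0)
       \<and> (\<forall>t::real. t > 0 \<longrightarrow> (\<forall>\<epsilon>>0.
           (\<lambda>n. let k = nat \<lfloor>real n * t\<rfloor>;
                    Q = M n \<Otimes>\<^sub>M measure_pmf (pair_pmf (level_unif k) (level_unif k))
                in measure Q {z \<in> space Q.
                     let \<omega> = fst z; v = longest_common_prefix (fst (snd z)) (snd (snd z))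
                     in dist (X n v \<omega>) x > \<epsilon> \<or> dist (X n (v @ [False]) \<omega>) x > \<epsilon>
                        \<or> dist (X n (v @ [True]) \<omega>) x > \<epsilon>}) \<longlonglongrightarrow> 0))"
proof -
  have P1: "(\<lambda>n. measure (M n) {\<omega> \<in> space (M n). \<exists>\<sigma>\<in>set ss. dist (X n \<sigma> \<omega>) x > \<epsilon>}) \<longlonglongrightarrow> 0"
    if \<epsilon>: "\<epsilon> > 0" for ss :: "bool list list" and \<epsilon> :: real
  proof (rule tendsto_sandwich[where f="\<lambda>_. 0"])
    let ?g = "\<lambda>n. \<Sum>\<sigma>\<in>set ss. 2^length \<sigma> * measure (M n \<Otimes>\<^sub>M coin_measure) {z \<in> space (M n \<Otimes>\<^sub>M coin_measure). dist (X n (walk (snd z) (length \<sigma>)) (fst z)) x > \<epsilon>}"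
    show "eventually (\<lambda>n. 0 \<le> measure (M n) {\<omega> \<in> space (M n). \<exists>\<sigma>\<in>set ss. dist (X n \<sigma> \<omega>) x > \<epsilon>}) sequentially"
      by simp
    show "eventually (\<lambda>n. measure (M n) {\<omega> \<in> space (M n). \<exists>\<sigma>\<in>set ss. dist (X n \<sigma> \<omega>) x > \<epsilon>} \<le> ?g n) sequentially"
      using eventually_ge_at_top[of 1]
    proof (rule eventually_mono)
      fix n :: nat assume "n \<ge> 1"
      then have tm: "tree_markov (M n) (X n) (p n)" by (rule markov)
      show "measure (M n) {\<omega> \<in> space (M n). \<exists>\<sigma>\<in>set ss. dist (X n \<sigma> \<omega>) x > \<epsilon>} \<le> ?g n"
        by (rule part1_bound) (use tm in \<open>auto simp: tree_markov_def\<close>)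
    qed
    show "(\<lambda>_. 0::real) \<longlonglongrightarrow> 0" by simp
    have "?g \<longlonglongrightarrow> (\<Sum>\<sigma>\<in>set ss. 2^length \<sigma> * 0)"
    proof (rule tendsto_sum)
      fix \<sigma> assume "\<sigma> \<in> set ss"
      show "(\<lambda>n. 2^length \<sigma> * measure (M n \<Otimes>\<^sub>M coin_measure) {z \<in> space (M n \<Otimes>\<^sub>M coin_measure). dist (X n (walk (snd z) (length \<sigma>)) (fst z)) x > \<epsilon>}) \<longlonglongrightarrow> 2^length \<sigma> * 0"
        by (rule tendsto_mult[OF tendsto_const R_m_conv[OF markov N_prob R_cadlag R_init conv \<epsilon>]])
    qed
    then show "?g \<longlonglongrightarrow> 0" by simp
  qed
  show ?thesis
  proof (intro conjI allI impI)
    fix ss :: "bool list list" and \<epsilon> :: real assume "\<epsilon> > 0"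
    then show "(\<lambda>n. measure (M n) {\<omega> \<in> space (M n). \<exists>\<sigma>\<in>set ss. dist (X n \<sigma> \<omega>) x > \<epsilon>}) \<longlonglongrightarrow> 0"
      by (rule P1)
  next
    fix t :: real and \<epsilon> :: real assume t: "t > 0" and \<epsilon>: "\<epsilon> > 0"
    show "(\<lambda>n. let k = nat \<lfloor>real n * t\<rfloor>;
                    Q = M n \<Otimes>\<^sub>M measure_pmf (pair_pmf (level_unif k) (level_unif k))
                in measure Q {z \<in> space Q.
                     let \<omega> = fst z; v = longest_common_prefix (fst (snd z)) (snd (snd z))
                     in dist (X n v \<omega>) x > \<epsilon> \<or> dist (X n (v @ [False]) \<omega>) x > \<epsilon>
                        \<or> dist (X n (v @ [True]) \<omega>) x > \<epsilon>}) \<longlonglongrightarrow> 0"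
      unfolding Let_def
    proof (rule tendstoI)
      fix \<eta> :: real assume \<eta>: "\<eta> > 0"
      obtain J where J: "(1/2::real)^J < \<eta>/2" using real_arch_pow_inv[of "\<eta>/2" "1/2"] \<eta> by auto
      have fin: "finite {\<sigma> :: bool list. length \<sigma> \<le> Suc J}"
        using finite_lists_length_le[of "UNIV :: bool set" "Suc J"] by simp
      obtain ss where ss: "set ss = {\<sigma> :: bool list. length \<sigma> \<le> Suc J}"
        using finite_list[OF fin] by blast
      have cov: "\<And>\<sigma>. length \<sigma> \<le> Suc J \<Longrightarrow> \<sigma> \<in> set ss" using ss by simp
      have ev: "eventually (\<lambda>n. measure (M n) {\<omega> \<in> space (M n). \<exists>\<sigma>\<in>set ss. dist (X n \<sigma> \<omega>) x > \<epsilon>} < \<eta>/2) sequentially"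
        by (rule order_tendstoD(2)[OF P1[OF \<epsilon>, of ss]]) (use \<eta> in simp)
      show "eventually (\<lambda>n. dist (measure (M n \<Otimes>\<^sub>M measure_pmf (pair_pmf (level_unif (nat \<lfloor>real n * t\<rfloor>)) (level_unif (nat \<lfloor>real n * t\<rfloor>))))
               {z \<in> space (M n \<Otimes>\<^sub>M measure_pmf (pair_pmf (level_unif (nat \<lfloor>real n * t\<rfloor>)) (level_unif (nat \<lfloor>real n * t\<rfloor>)))).
                  dist (X n (longest_common_prefix (fst (snd z)) (snd (snd z))) (fst z)) x > \<epsilon>
                \<or> dist (X n (longest_common_prefix (fst (snd z)) (snd (snd z)) @ [False]) (fst z)) x > \<epsilon>
                \<or> dist (X n (longest_common_prefix (fst (snd z)) (snd (snd z)) @ [True]) (fst z)) x > \<epsilon>}) 0 < \<eta>) sequentially"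
        using eventually_conj[OF ev eventually_ge_at_top[of 1]]
      proof (rule eventually_mono)
        fix n :: nat
        assume hn: "measure (M n) {\<omega> \<in> space (M n). \<exists>\<sigma>\<in>set ss. dist (X n \<sigma> \<omega>) x > \<epsilon>} < \<eta>/2 \<and> n \<ge> 1"
        then have tm: "tree_markov (M n) (X n) (p n)" using markov by blast
        have Mp: "prob_space (M n)" and Xm: "\<And>\<sigma>. X n \<sigma> \<in> borel_measurable (M n)"
          using tm by (auto simp: tree_markov_def)
        let ?k = "nat \<lfloor>real n * t\<rfloor>"
        have b: "measure (M n \<Otimes>\<^sub>M measure_pmf (pair_pmf (level_unif ?k) (level_unif ?k)))
               {z \<in> space (M n \<Otimes>\<^sub>M measure_pmf (pair_pmf (level_unif ?k) (level_unif ?k))).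
                  dist (X n (longest_common_prefix (fst (snd z)) (snd (snd z))) (fst z)) x > \<epsilon>
                \<or> dist (X n (longest_common_prefix (fst (snd z)) (snd (snd z)) @ [False]) (fst z)) x > \<epsilon>
                \<or> dist (X n (longest_common_prefix (fst (snd z)) (snd (snd z)) @ [True]) (fst z)) x > \<epsilon>}
             \<le> measure (M n) {\<omega> \<in> space (M n). \<exists>\<sigma>\<in>set ss. dist (X n \<sigma> \<omega>) x > \<epsilon>} + (1/2)^J"
          by (rule part2_bound[OF Mp Xm cov])
        then show "dist (measure (M n \<Otimes>\<^sub>M measure_pmf (pair_pmf (level_unif ?k) (level_unif ?k)))
               {z \<in> space (M n \<Otimes>\<^sub>M measure_pmf (pair_pmf (level_unif ?k) (level_unif ?k))).
                  dist (X n (longest_common_prefix (fst (snd z)) (snd (snd z))) (fst z)) x > \<epsilon>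
                \<or> dist (X n (longest_common_prefix (fst (snd z)) (snd (snd z)) @ [False]) (fst z)) x > \<epsilon>
                \<or> dist (X n (longest_common_prefix (fst (snd z)) (snd (snd z)) @ [True]) (fst z)) x > \<epsilon>}) 0 < \<eta>"
          using hn J by (simp add: dist_real_def)
      qed
    qed
  qed
qed

end
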